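(* Let $k\ge1$, let $C=z^{-k}C_k+\dots+z^{-1}C_1\in\mathfrak t_k^*$ with $C_k\in\mathfrak t^{reg}$, and for $X\in\mathfrak g$ consider $\phi_X:B_k^{od}\to\mathbb C$, $b\mapsto\langle\mathrm{Ad}_bC,X\rangle$. Then $\phi_X$ is affine linear in the variables $(b_{\lfloor(k+1)/2\rfloor},\dots,b_{k-1})$. For fixed values of $b_1,\dots,b_{\lfloor(k+1)/2\rfloor-1}$, $\phi_X$ is independent of $b_{\lfloor(k+1)/2\rfloor},\dots,b_{k-1}$ if and only if $X\in\mathfrak t$ and $b_1,\dots,b_{\lfloor(k-2)/2\rfloor}$ commute with $X$. In that case, if $k$ is odd and $b_{(k-1)/2}=b^l+b^u$ with $b^l$ strictly lower and $b^u$ strictly upper triangular, then $\phi_X$ is affine linear in $b^u$, and it is independent of $b^u$ if and only if $b^l$ commutes with $X$.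
   Context: $\mathfrak g=\mathfrak{gl}_n(\mathbb C)$, $\mathfrak t$ the diagonal matrices, $\mathfrak t^{reg}$ diagonal matrices with distinct eigenvalues, $\mathfrak g^{od}$ matrices with zero diagonal. $G_k=GL_n(\mathbb C[[z]]/z^k)$; $\mathfrak t_k^*$, $\mathfrak g_k^*$ identified with $\{z^{-k}Y_k+\dots+z^{-1}Y_1:Y_i\in\mathfrak g\}$ (resp. $Y_i\in\mathfrak t$) via the pairing with $\mathfrak g_k=\mathfrak{gl}_n(\mathbb C[[z]]/z^k)$ given by $\langle Y,X\rangle=\mathrm{Res}_0\mathrm{tr}(YX)=\sum_{i=1}^k\mathrm{tr}(Y_iX_{i-1})$; a constant $X\in\mathfrak g$ is viewed in $\mathfrak g_k$, so $\langle Y,X\rangle=\mathrm{tr}(Y_1X)$. $\mathrm{Ad}_bY=bYb^{-1}$. $B_k^{od}=\{1+zb_1+\dots+z^{k-1}b_{k-1}:b_i\in\mathfrak g^{od}\}\subset G_k$. *)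

theory Defs
  imports "HOL-Analysis.Analysis"
begin

text \<open>Matrices in gl_n(C) are complex^'n^'n, with the index type 'n finite and
linearly ordered (the order is needed for lower/upper triangularity).\<close>

definition is_diag :: "complex^'n^'n \<Rightarrow> bool" where
  "is_diag A \<longleftrightarrow> (\<forall>i j. i \<noteq> j \<longrightarrow> A$i$j = 0)"

definition is_diag_reg :: "complex^'n^'n \<Rightarrow> bool" where
  "is_diag_reg A \<longleftrightarrow> is_diag A \<and> (\<forall>i j. i \<noteq> j \<longrightarrow> A$i$i \<noteq> A$j$j)"

definition is_offdiag :: "complex^'n^'n \<Rightarrow> bool" where
  "is_offdiag A \<longleftrightarrow> (\<forall>i. A$i$i = 0)"

definition strictly_lower :: "complex^('n::{finite,linorder})^('n::{finite,linorder}) \<Rightarrow> bool" where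
  "strictly_lower A \<longleftrightarrow> (\<forall>i j. i \<le> j \<longrightarrow> A$i$j = 0)"

definition strictly_upper :: "complex^('n::{finite,linorder})^('n::{finite,linorder}) \<Rightarrow> bool" where
  "strictly_upper A \<longleftrightarrow> (\<forall>i j. j \<le> i \<longrightarrow> A$i$j = 0)"

definition cscale :: "complex \<Rightarrow> complex^'n^'n \<Rightarrow> complex^'n^'n" where
  "cscale c A = (\<chi> i j. c * A$i$j)"

definition clinear_fun :: "(complex^'n^'n \<Rightarrow> complex) \<Rightarrow> bool" where
  "clinear_fun L \<longleftrightarrow> (\<forall>x y. L (x + y) = L x + L y) \<and> (\<forall>c x. L (cscale c x) = c * L x)"

text \<open>An element b = 1 + z b_1 + ... + z^(k-1) b_(k-1) of G_k is encoded by
the function i \<mapsto> b_i (values at 0 and at i \<ge> k are ignored);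
its coefficient sequence is bser.\<close>
definition bser :: "nat \<Rightarrow> (nat \<Rightarrow> complex^'n^'n) \<Rightarrow> nat \<Rightarrow> complex^'n^'n" where
  "bser k b i = (if i = 0 then mat 1 else if i < k then b i else 0)"

definition in_Bod :: "nat \<Rightarrow> (nat \<Rightarrow> complex^'n^'n) \<Rightarrow> bool" where
  "in_Bod k b \<longleftrightarrow> (\<forall>i. 1 \<le> i \<and> i < k \<longrightarrow> is_offdiag (b i))"

text \<open>Coefficients of the inverse power series b^(-1) (relevant modulo z^k):
  b^(-1) b = 1 determines them recursively.\<close>
function tinv :: "nat \<Rightarrow> (nat \<Rightarrow> complex^'n^'n) \<Rightarrow> nat \<Rightarrow> complex^'n^'n" where
  "tinv k b 0 = mat 1"
| "tinv k b (Suc j) = - (\<Sum>i\<in>{1..Suc j}. bser k b i ** tinv k b (Suc j - i))"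
  by pat_completeness auto
termination
  by (relation "Wellfounded.measure (\<lambda>(k, b, j). j)") auto

text \<open>Coadjoint action: coefficient of z^(-m) (1 \<le> m \<le> k) of b C b^(-1),
where C = sum_{l=1..k} z^(-l) C_l.\<close>
definition coadj :: "nat \<Rightarrow> (nat \<Rightarrow> complex^'n^'n) \<Rightarrow> (nat \<Rightarrow> complex^'n^'n) \<Rightarrow> nat \<Rightarrow> complex^'n^'n" where
  "coadj k b C m = (\<Sum>l\<in>{1..k}. \<Sum>i<k. \<Sum>j<k.
       if i + j + m = l then bser k b i ** C l ** tinv k b j else 0)"

text \<open>Pairing of Y = sum z^(-i) Y_i in g_k^* with X = sum z^i X_i in g_k:
  Res_0 tr(Y X) = sum_{i=1..k} tr(Y_i X_(i-1)).\<close>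
definition pairing :: "nat \<Rightarrow> (nat \<Rightarrow> complex^'n^'n) \<Rightarrow> (nat \<Rightarrow> complex^'n^'n) \<Rightarrow> complex" where
  "pairing k Y Xs = (\<Sum>i\<in>{1..k}. trace (Y i ** Xs (i - 1)))"

definition const_gk :: "complex^'n^'n \<Rightarrow> nat \<Rightarrow> complex^'n^'n" where
  "const_gk X i = (if i = 0 then X else 0)"

definition phi :: "nat \<Rightarrow> (nat \<Rightarrow> complex^'n^'n) \<Rightarrow> complex^'n^'n \<Rightarrow> (nat \<Rightarrow> complex^'n^'n) \<Rightarrow> complex" where
  "phi k C X b = pairing k (coadj k b C) (const_gk X)"

end

theory Submission imports Defs "HOL-Computational_Algebra.Formal_Power_Series" "HOL-Library.Function_Algebras"
begin

type_synonym 'n mat = "complex^'n^'n"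

lemma mm_rdistrib: "((A::'n::finite mat) + B) ** C = A ** C + B ** C"
  by (vector matrix_matrix_mult_def sum.distrib[symmetric] field_simps)
lemma mm_ldiff: "(A::'n::finite mat) ** (B - C) = A ** B - A ** C"
  by (vector matrix_matrix_mult_def sum_subtractf[symmetric] field_simps)
lemma mm_rdiff: "((A::'n::finite mat) - B) ** C = A ** C - B ** C"
  by (vector matrix_matrix_mult_def sum_subtractf[symmetric] field_simps)
lemma mm_lneg: "(- (A::'n::finite mat)) ** B = - (A ** B)"
  by (vector matrix_matrix_mult_def sum_negf[symmetric])
lemma mm_rneg: "(A::'n::finite mat) ** (- B) = - (A ** B)"
  by (vector matrix_matrix_mult_def sum_negf[symmetric])
lemma mm_sum_left: "(\<Sum>i\<in>S. f i :: 'n mat) ** (B::'n::finite mat) = (\<Sum>i\<in>S. f i ** B)"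
  by (induction S rule: infinite_finite_induct) (auto simp: mm_rdistrib)
lemma mm_sum_right: "(B::'n::finite mat) ** (\<Sum>i\<in>S. f i :: 'n mat) = (\<Sum>i\<in>S. B ** f i)"
  by (induction S rule: infinite_finite_induct) (auto simp: matrix_add_ldistrib)
lemma trace_sum: "trace (\<Sum>i\<in>S. f i :: 'n::finite mat) = (\<Sum>i\<in>S. trace (f i))"
  by (induction S rule: infinite_finite_induct) (auto simp: trace_add trace_0[simplified])
lemma trace_neg: "trace (- (A::'n::finite mat)) = - trace A"
  by (simp add: trace_def sum_negf)
lemma trace_zero: "trace (0::'n::finite mat) = 0"
  by (simp add: trace_def)

definition cm :: "(nat \<Rightarrow> 'n::finite mat) \<Rightarrow> (nat \<Rightarrow> 'n mat) \<Rightarrow> nat \<Rightarrow> 'n mat" (infixl "\<star>" 70)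
  where "cm f g n = (\<Sum>i=0..n. f i ** g (n - i))"
definition sone :: "nat \<Rightarrow> 'n::finite mat" where "sone n = (if n = 0 then mat 1 else 0)"
definition cst :: "'n::finite mat \<Rightarrow> nat \<Rightarrow> 'n mat" where "cst A n = (if n = 0 then A else 0)"
definition mono :: "nat \<Rightarrow> 'n::finite mat \<Rightarrow> nat \<Rightarrow> 'n mat" where "mono i A n = (if n = i then A else 0)"

lemma cm_assoc: "(f \<star> g) \<star> h = f \<star> (g \<star> h)"
proof
  fix n
  have "(\<Sum>j=0..n. \<Sum>i=0..j. f i ** g (j - i) ** h (n - j)) =
          (\<Sum>j=0..n. \<Sum>i=0..n - j. f j ** g i ** h (n - j - i))"
    by (rule fps_mult_assoc_lemma)
  then show "((f \<star> g) \<star> h) n = (f \<star> (g \<star> h)) n"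
    by (simp add: cm_def mm_sum_left mm_sum_right matrix_mul_assoc)
qed

lemma cm_add_left: "(f + g) \<star> h = f \<star> h + g \<star> h"
  by (rule ext) (simp add: cm_def mm_rdistrib sum.distrib)
lemma cm_add_right: "h \<star> (f + g) = h \<star> f + h \<star> g"
  by (rule ext) (simp add: cm_def matrix_add_ldistrib sum.distrib)
lemma cm_diff_left: "(f - g) \<star> h = f \<star> h - g \<star> h"
  by (rule ext) (simp add: cm_def mm_rdiff sum_subtractf)
lemma cm_diff_right: "h \<star> (f - g) = h \<star> f - h \<star> g"
  by (rule ext) (simp add: cm_def mm_ldiff sum_subtractf)
lemma cm_zero_left: "0 \<star> h = 0"
  by (rule ext) (simp add: cm_def)
lemma cm_zero_right: "h \<star> 0 = 0"
  by (rule ext) (simp add: cm_def)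
lemma cm_one_left: "sone \<star> h = h"
proof
  fix n show "(sone \<star> h) n = h n"
    unfolding cm_def sone_def by (simp add: if_distrib if_distribR sum.delta cong: if_cong)
qed
lemma cm_one_right: "h \<star> sone = h"
proof
  fix n
  have "(\<Sum>i=0..n. h i ** (if n - i = 0 then mat 1 else 0)) = (\<Sum>i=0..n. if i = n then h i else 0)"
    by (rule sum.cong) auto
  then show "(h \<star> sone) n = h n"
    unfolding cm_def sone_def by (simp add: sum.delta')
qed
lemma cm_cst_left: "(cst A \<star> h) n = A ** h n"
  unfolding cm_def cst_def by (simp add: if_distrib if_distribR sum.delta cong: if_cong)


definition eqk :: "nat \<Rightarrow> (nat \<Rightarrow> 'n::finite mat) \<Rightarrow> (nat \<Rightarrow> 'n mat) \<Rightarrow> bool"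
  where "eqk k f g \<longleftrightarrow> (\<forall>n<k. f n = g n)"
definition ordge :: "nat \<Rightarrow> (nat \<Rightarrow> 'n::finite mat) \<Rightarrow> bool"
  where "ordge r f \<longleftrightarrow> (\<forall>n<r. f n = 0)"

lemma eqk_refl: "eqk k f f" by (simp add: eqk_def)
lemma eqk_sym: "eqk k f g \<Longrightarrow> eqk k g f" by (simp add: eqk_def)
lemma eqk_trans: "eqk k f g \<Longrightarrow> eqk k g h \<Longrightarrow> eqk k f h" by (simp add: eqk_def)

lemma cm_eqk: assumes "eqk k f f'" "eqk k g g'" shows "eqk k (f \<star> g) (f' \<star> g')"
  unfolding eqk_def cm_def
proof (intro allI impI)
  fix n assume n: "n < k"
  show "(\<Sum>i = 0..n. f i ** g (n - i)) = (\<Sum>i = 0..n. f' i ** g' (n - i))"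
    by (rule sum.cong) (use assms n in \<open>auto simp: eqk_def\<close>)
qed

lemma cm_ordge: assumes "ordge a f" "ordge b g" shows "ordge (a + b) (f \<star> g)"
  unfolding ordge_def cm_def
proof (intro allI impI)
  fix n assume n: "n < a + b"
  have "\<And>i. i \<in> {0..n} \<Longrightarrow> f i ** g (n - i) = 0"
  proof -
    fix i assume "i \<in> {0..n}"
    then have "i < a \<or> n - i < b" using n by auto
    then show "f i ** g (n - i) = 0" using assms by (auto simp: ordge_def)
  qed
  then show "(\<Sum>i = 0..n. f i ** g (n - i)) = 0" by simp
qed

lemma ordge_mono: "ordge a f \<Longrightarrow> b \<le> a \<Longrightarrow> ordge b f" by (simp add: ordge_def)

lemma bser_tinv: "bser k b \<star> tinv k b = sone"
proof
  fix n show "(bser k b \<star> tinv k b) n = sone n"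
  proof (cases n)
    case 0 then show ?thesis by (simp add: cm_def bser_def sone_def)
  next
    case (Suc j)
    have "(bser k b \<star> tinv k b) n = bser k b 0 ** tinv k b (Suc j) + (\<Sum>i\<in>{1..Suc j}. bser k b i ** tinv k b (Suc j - i))"
      unfolding cm_def Suc by (simp add: sum.atLeast_Suc_atMost)
    also have "\<dots> = 0" by (simp add: bser_def)
    finally show ?thesis by (simp add: sone_def Suc)
  qed
qed

function linv :: "(nat \<Rightarrow> 'n::finite mat) \<Rightarrow> nat \<Rightarrow> 'n mat" where
  "linv f 0 = mat 1"
| "linv f (Suc j) = - (\<Sum>i\<in>{0..j}. linv f i ** f (Suc j - i))"
  by pat_completeness auto
termination
  by (relation "Wellfounded.measure (\<lambda>(f, j). j)") auto

lemma linv_cm: assumes "f 0 = mat 1" shows "linv f \<star> f = sone"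
proof
  fix n show "(linv f \<star> f) n = sone n"
  proof (cases n)
    case 0 then show ?thesis using assms by (simp add: cm_def sone_def)
  next
    case (Suc j)
    have "(linv f \<star> f) n = linv f (Suc j) ** f 0 + (\<Sum>i\<in>{0..j}. linv f i ** f (Suc j - i))"
      unfolding cm_def Suc by (simp add: sum.atLeast0_atMost_Suc add.commute)
    also have "\<dots> = 0" using assms by simp
    finally show ?thesis by (simp add: sone_def Suc)
  qed
qed

lemma tinv_bser: "tinv k b \<star> bser k b = sone"
proof -
  let ?g = "linv (bser k b)"
  have g: "?g \<star> bser k b = sone" by (rule linv_cm) (simp add: bser_def)
  have "?g = ?g \<star> (bser k b \<star> tinv k b)" by (simp add: bser_tinv cm_one_right)
  also have "\<dots> = tinv k b" by (simp add: cm_assoc[symmetric] g cm_one_left)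
  finally show ?thesis using g by simp
qed

lemma inv_unique:
  assumes "t \<star> f = sone" "eqk k (f \<star> s) sone" shows "eqk k t s"
proof -
  have "s = t \<star> (f \<star> s)" by (simp add: cm_assoc[symmetric] assms(1) cm_one_left)
  moreover have "eqk k (t \<star> (f \<star> s)) (t \<star> sone)" by (rule cm_eqk[OF eqk_refl assms(2)])
  ultimately show ?thesis by (simp add: cm_one_right eqk_sym)
qed


definition PhiW :: "nat \<Rightarrow> (nat \<Rightarrow> 'n::finite mat) \<Rightarrow> (nat \<Rightarrow> 'n mat) \<Rightarrow> complex"
  where "PhiW k C W = (\<Sum>l=1..k. trace (C l ** W (l - 1)))"

lemma PhiW_eqk: "eqk k W W' \<Longrightarrow> PhiW k C W = PhiW k C W'"
  unfolding PhiW_def eqk_def by (intro sum.cong) auto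
lemma PhiW_add: "PhiW k C (W + W') = PhiW k C W + PhiW k C W'"
  unfolding PhiW_def by (simp add: matrix_add_ldistrib trace_add sum.distrib)
lemma PhiW_diff: "PhiW k C (W - W') = PhiW k C W - PhiW k C W'"
  unfolding PhiW_def by (simp add: mm_ldiff trace_sub sum_subtractf)
lemma PhiW_zero: "PhiW k C 0 = 0"
  unfolding PhiW_def by (simp add: trace_zero)

lemma double_sum_aux:
  fixes g :: "nat \<Rightarrow> nat \<Rightarrow> complex"
  assumes "1 \<le> l" "l \<le> k"
  shows "(\<Sum>i<k. \<Sum>j<k. if i + j + 1 = l then g i j else 0) = (\<Sum>j=0..l-1. g (l - 1 - j) j)"
proof -
  have "(\<Sum>i<k. \<Sum>j<k. if i + j + 1 = l then g i j else 0) = (\<Sum>j<k. \<Sum>i<k. if i + j + 1 = l then g i j else 0)"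
    by (rule sum.swap)
  also have "\<dots> = (\<Sum>j<k. if j < l then g (l - 1 - j) j else 0)"
  proof (rule sum.cong[OF refl])
    fix j assume "j \<in> {..<k}"
    have "(\<Sum>i<k. if i + j + 1 = l then g i j else 0) = (\<Sum>i<k. if i = l - 1 - j \<and> j < l then g i j else 0)"
      by (rule sum.cong) auto
    also have "\<dots> = (if j < l then g (l - 1 - j) j else 0)"
      using assms by (auto simp: sum.delta')
    finally show "(\<Sum>i<k. if i + j + 1 = l then g i j else 0) = (if j < l then g (l - 1 - j) j else 0)" .
  qed
  also have "\<dots> = (\<Sum>j\<in>{..<k} \<inter> {j. j < l}. g (l - 1 - j) j)"
    by (subst sum.inter_restrict[OF finite_lessThan]) (simp only: mem_Collect_eq)
  also have "{..<k} \<inter> {j. j < l} = {0..l-1}" using assms by auto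
  finally show ?thesis .
qed

lemma phi_eq:
  assumes "k \<ge> 1"
  shows "phi k C X b = PhiW k C (tinv k b \<star> (cst X \<star> bser k b))"
proof -
  let ?t = "tinv k b" and ?\<beta> = "bser k b"
  have "phi k C X b = trace (coadj k b C 1 ** X)"
  proof -
    have "phi k C X b = (\<Sum>i\<in>{1..k}. trace (coadj k b C i ** const_gk X (i - 1)))"
      by (simp add: phi_def pairing_def)
    also have "\<dots> = (\<Sum>i\<in>{1..k}. if i = 1 then trace (coadj k b C 1 ** X) else 0)"
      by (rule sum.cong) (auto simp: const_gk_def trace_zero)
    also have "\<dots> = trace (coadj k b C 1 ** X)" using assms by (simp add: sum.delta)
    finally show ?thesis .
  qed
  also have "\<dots> = (\<Sum>l\<in>{1..k}. \<Sum>i<k. \<Sum>j<k. if i + j + 1 = l then trace (?\<beta> i ** C l ** ?t j ** X) else 0)"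
    unfolding coadj_def by (simp add: mm_sum_left trace_sum if_distrib if_distribR trace_zero cong: if_cong)
  also have "\<dots> = (\<Sum>l\<in>{1..k}. \<Sum>j=0..l-1. trace (?\<beta> (l - 1 - j) ** C l ** ?t j ** X))"
    by (rule sum.cong[OF refl]) (rule double_sum_aux, auto)
  also have "\<dots> = (\<Sum>l\<in>{1..k}. \<Sum>j=0..l-1. trace (C l ** (?t j ** (X ** ?\<beta> (l - 1 - j)))))"
  proof (intro sum.cong refl)
    fix l j
    have "trace (?\<beta> (l - 1 - j) ** C l ** ?t j ** X) = trace (?\<beta> (l - 1 - j) ** (C l ** ?t j ** X))"
      by (simp add: matrix_mul_assoc)
    also have "\<dots> = trace ((C l ** ?t j ** X) ** ?\<beta> (l - 1 - j))" by (rule trace_mul_sym)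
    finally show "trace (?\<beta> (l - 1 - j) ** C l ** ?t j ** X) = trace (C l ** (?t j ** (X ** ?\<beta> (l - 1 - j))))"
      by (simp add: matrix_mul_assoc)
  qed
  also have "\<dots> = PhiW k C (?t \<star> (cst X \<star> ?\<beta>))"
    unfolding PhiW_def cm_def[of ?t] by (simp add: cm_cst_left mm_sum_right trace_sum)
  finally show ?thesis .
qed


lemma cscale_mm_right: "(A::'n::finite mat) ** cscale c B = cscale c (A ** B)"
  by (vector cscale_def matrix_matrix_mult_def sum_distrib_left algebra_simps)
lemma cscale_mm_left: "cscale c (A::'n::finite mat) ** B = cscale c (A ** B)"
  by (vector cscale_def matrix_matrix_mult_def sum_distrib_left algebra_simps)
lemma cscale_add: "cscale c ((A::'n::finite mat) + B) = cscale c A + cscale c B"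
  by (vector cscale_def algebra_simps)
lemma cscale_diff: "cscale c ((A::'n::finite mat) - B) = cscale c A - cscale c B"
  by (vector cscale_def algebra_simps)
lemma cscale_zero: "cscale c (0::'n::finite mat) = 0"
  by (vector cscale_def)
lemma cscale_sum: "cscale c (\<Sum>i\<in>S. f i :: 'n::finite mat) = (\<Sum>i\<in>S. cscale c (f i))"
  by (induction S rule: infinite_finite_induct) (auto simp: cscale_add cscale_zero)
lemma trace_cscale: "trace (cscale c (A::'n::finite mat)) = c * trace A"
  by (simp add: trace_def cscale_def sum_distrib_left)

definition css :: "complex \<Rightarrow> (nat \<Rightarrow> 'n::finite mat) \<Rightarrow> nat \<Rightarrow> 'n mat"
  where "css c f n = cscale c (f n)"

lemma cm_css_right: "f \<star> css c g = css c (f \<star> g)"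
  by (rule ext) (simp add: cm_def css_def cscale_mm_right cscale_sum)
lemma cm_css_left: "css c f \<star> g = css c (f \<star> g)"
  by (rule ext) (simp add: cm_def css_def cscale_mm_left cscale_sum)
lemma css_diff: "css c (f - g) = css c f - css c g"
  by (rule ext) (simp add: css_def cscale_diff)
lemma PhiW_css: "PhiW k C (css c W) = c * PhiW k C W"
  by (simp add: PhiW_def css_def cscale_mm_right trace_cscale sum_distrib_left)
lemma mono_css: "mono i (cscale c M) = css c (mono i M)"
  by (rule ext) (simp add: mono_def css_def cscale_zero)
lemma mono_add: "mono i (M + N) = mono i M + mono i N"
  by (rule ext) (simp add: mono_def)

definition Vs :: "nat \<Rightarrow> 'n::finite mat \<Rightarrow> (nat \<Rightarrow> 'n mat) \<Rightarrow> nat \<Rightarrow> 'n mat"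
  where "Vs k X b0 = tinv k b0 \<star> (cst X \<star> bser k b0)"
definition LinF :: "nat \<Rightarrow> (nat \<Rightarrow> 'n::finite mat) \<Rightarrow> 'n mat \<Rightarrow> (nat \<Rightarrow> 'n mat) \<Rightarrow> (nat \<Rightarrow> 'n mat) \<Rightarrow> complex"
  where "LinF k C X b0 d = PhiW k C (tinv k b0 \<star> (cst X \<star> d) - tinv k b0 \<star> d \<star> Vs k X b0)"

lemma LinF_add: "LinF k C X b0 (d + e) = LinF k C X b0 d + LinF k C X b0 e"
  unfolding LinF_def
  by (simp add: cm_add_left cm_add_right PhiW_add[symmetric] PhiW_diff[symmetric] algebra_simps)
lemma LinF_zero: "LinF k C X b0 0 = 0"
  unfolding LinF_def by (simp add: cm_zero_left cm_zero_right PhiW_zero)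
lemma LinF_css: "LinF k C X b0 (css c d) = c * LinF k C X b0 d"
  unfolding LinF_def
  by (simp add: cm_css_left cm_css_right css_diff[symmetric] PhiW_css)
lemma LinF_sum: "LinF k C X b0 (\<Sum>i\<in>S. f i) = (\<Sum>i\<in>S. LinF k C X b0 (f i))"
proof (induction S rule: infinite_finite_induct)
  case (infinite A) then show ?case by (simp only: sum.infinite[OF infinite] LinF_zero)
next
  case empty then show ?case by (simp only: sum.empty LinF_zero)
next
  case (insert x F) then show ?case by (simp only: sum.insert[OF insert(1,2)] LinF_add insert(3))
qed

lemma sum_fapply: "(\<Sum>i\<in>S. f i) (n::nat) = (\<Sum>i\<in>S. f i n :: 'n::finite mat)"
  by (induction S rule: infinite_finite_induct) auto

lemma clinear_LinF: "clinear_fun (\<lambda>M. LinF k C X b0 (mono i M))"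
  unfolding clinear_fun_def by (simp add: mono_add LinF_add mono_css LinF_css)

definition lowp :: "nat \<Rightarrow> (nat \<Rightarrow> 'n::finite mat) \<Rightarrow> nat \<Rightarrow> 'n mat"
  where "lowp m b i = (if 1 \<le> i \<and> i < m then b i else 0)"

lemma ordge_zero: "ordge 0 f" by (simp add: ordge_def)

lemma decomp:
  assumes k: "k \<ge> 1" and m: "k \<le> 2 * m" "1 \<le> m"
  shows "phi k C X b = phi k C X (lowp m b) + LinF k C X (lowp m b) (\<Sum>i\<in>{m..<k}. mono i (b i))"
proof -
  let ?bo = "lowp m b"
  let ?\<beta>o = "bser k ?bo" and ?to = "tinv k ?bo" and ?\<beta> = "bser k b" and ?t = "tinv k b"
  define \<delta> where "\<delta> = (\<Sum>i\<in>{m..<k}. mono i (b i))"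
  have \<delta>n: "\<delta> n = (if m \<le> n \<and> n < k then b n else 0)" for n
    unfolding \<delta>_def sum_fapply by (simp add: mono_def sum.delta)
  have \<beta>: "?\<beta> = ?\<beta>o + \<delta>"
  proof
    fix n show "?\<beta> n = (?\<beta>o + \<delta>) n"
      using m unfolding plus_fun_apply \<delta>n by (auto simp: bser_def lowp_def)
  qed
  have o\<delta>: "ordge m \<delta>" unfolding ordge_def \<delta>n by auto
  define s where "s = ?to - ?to \<star> \<delta> \<star> ?to"
  have "?\<beta> \<star> s = sone - \<delta> \<star> ?to \<star> (\<delta> \<star> ?to)"
    unfolding s_def \<beta>
    by (simp add: cm_add_left cm_diff_right cm_assoc[symmetric] bser_tinv cm_one_left)
  moreover have "ordge k (\<delta> \<star> ?to \<star> (\<delta> \<star> ?to))"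
  proof -
    have h: "ordge m (\<delta> \<star> ?to)" using cm_ordge[OF o\<delta> ordge_zero[of "?to"]] by (metis add_0_right add_0)
    have "ordge (m + m) (\<delta> \<star> ?to \<star> (\<delta> \<star> ?to))" by (rule cm_ordge[OF h h])
    then show ?thesis by (rule ordge_mono) (use m in simp)
  qed
  ultimately have "eqk k (?\<beta> \<star> s) sone" by (simp add: eqk_def ordge_def)
  then have ts: "eqk k ?t s" by (rule inv_unique[OF tinv_bser])
  have "phi k C X b = PhiW k C (?t \<star> (cst X \<star> ?\<beta>))" by (rule phi_eq[OF k])
  also have "\<dots> = PhiW k C (s \<star> (cst X \<star> ?\<beta>))"
    by (rule PhiW_eqk, rule cm_eqk[OF ts eqk_refl])
  also have "s \<star> (cst X \<star> ?\<beta>) = Vs k X ?bo + (?to \<star> (cst X \<star> \<delta>) - ?to \<star> \<delta> \<star> Vs k X ?bo)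
       - ?to \<star> \<delta> \<star> ?to \<star> (cst X \<star> \<delta>)"
    unfolding s_def \<beta> Vs_def
    by (simp add: cm_add_left cm_add_right cm_diff_left cm_diff_right cm_assoc algebra_simps)
  also have "PhiW k C \<dots> = PhiW k C (Vs k X ?bo + (?to \<star> (cst X \<star> \<delta>) - ?to \<star> \<delta> \<star> Vs k X ?bo))"
  proof (rule PhiW_eqk)
    have h1: "ordge m (?to \<star> \<delta>)" using cm_ordge[OF ordge_zero[of "?to"] o\<delta>] by (metis add_0_right add_0)
    have h2: "ordge m (?to \<star> \<delta> \<star> ?to)" using cm_ordge[OF h1 ordge_zero[of "?to"]] by (metis add_0_right add_0)
    have h3: "ordge m (?to \<star> \<delta> \<star> ?to \<star> cst X)" using cm_ordge[OF h2 ordge_zero[of "cst X"]] by (metis add_0_right add_0)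
    have "ordge (m + m) (?to \<star> \<delta> \<star> ?to \<star> cst X \<star> \<delta>)" using cm_ordge[OF h3 o\<delta>] .
    then have "ordge k (?to \<star> \<delta> \<star> ?to \<star> (cst X \<star> \<delta>))"
      by (simp add: cm_assoc ordge_def) (use m in auto)
    then show "eqk k (Vs k X ?bo + (?to \<star> (cst X \<star> \<delta>) - ?to \<star> \<delta> \<star> Vs k X ?bo) - ?to \<star> \<delta> \<star> ?to \<star> (cst X \<star> \<delta>))
         (Vs k X ?bo + (?to \<star> (cst X \<star> \<delta>) - ?to \<star> \<delta> \<star> Vs k X ?bo))"
      by (simp add: eqk_def ordge_def)
  qed
  also have "\<dots> = phi k C X ?bo + LinF k C X ?bo \<delta>"
    by (simp add: PhiW_add LinF_def phi_eq[OF k] Vs_def)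
  finally show ?thesis by (simp add: \<delta>_def)
qed


definition E :: "'n::finite \<Rightarrow> 'n \<Rightarrow> 'n mat" where "E p q = (\<chi> i j. if i = p \<and> j = q then 1 else 0)"

lemma trace_E: "trace (A ** E p q) = A $ q $ p"
proof -
  have "trace (A ** E p q) = (\<Sum>i\<in>UNIV. \<Sum>j\<in>UNIV. A$i$j * (if j = p \<and> i = q then 1 else 0))"
    by (simp add: trace_def matrix_matrix_mult_def E_def)
  also have "\<dots> = (\<Sum>i\<in>UNIV. if i = q then A$i$p else 0)"
    by (rule sum.cong[OF refl]) (auto simp: if_distrib cong: if_cong)
  finally show ?thesis by simp
qed

lemma offdiag_E: "p \<noteq> q \<Longrightarrow> is_offdiag (E p q)"
  by (simp add: is_offdiag_def E_def)

lemma diag_right: "is_diag D \<Longrightarrow> ((A::'n::finite mat) ** D) $ i $ j = A$i$j * D$j$j"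
proof -
  assume d: "is_diag D"
  have "(A ** D) $ i $ j = (\<Sum>l\<in>UNIV. if l = j then A$i$l * D$l$j else 0)"
    unfolding matrix_matrix_mult_def vec_lambda_beta by (rule sum.cong) (use d in \<open>auto simp: is_diag_def\<close>)
  then show ?thesis by simp
qed

lemma diag_left: "is_diag D \<Longrightarrow> (D ** (A::'n::finite mat)) $ i $ j = D$i$i * A$i$j"
proof -
  assume d: "is_diag D"
  have "(D ** A) $ i $ j = (\<Sum>l\<in>UNIV. if l = i then D$i$l * A$l$j else 0)"
    unfolding matrix_matrix_mult_def vec_lambda_beta by (rule sum.cong) (use d in \<open>auto simp: is_diag_def\<close>)
  then show ?thesis by simp
qed

lemma diag_comm: "is_diag A \<Longrightarrow> is_diag B \<Longrightarrow> (A::'n::finite mat) ** B = B ** A"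
  by (simp add: vec_eq_iff diag_left diag_right) (metis is_diag_def mult.commute mult_zero_left mult_zero_right)

lemma trace_cyc3: "trace ((A::'n::finite mat) ** B ** D) = trace (D ** A ** B)"
  by (metis trace_mul_sym matrix_mul_assoc)

lemma trace_comm_zero:
  assumes "A ** X = X ** (A::'n::finite mat)"
  shows "trace (A ** (X ** M - M ** X)) = 0"
proof -
  have "trace (A ** (M ** X)) = trace (X ** A ** M)"
    by (metis trace_cyc3 matrix_mul_assoc)
  also have "\<dots> = trace (A ** (X ** M))" using assms by (simp add: matrix_mul_assoc)
  finally show ?thesis by (simp add: mm_ldiff trace_sub)
qed

lemma diagX:
  fixes C X :: "'n::finite mat"
  assumes C: "is_diag_reg C" and H: "\<forall>M. is_offdiag M \<longrightarrow> trace (C ** (X ** M - M ** X)) = 0"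
  shows "is_diag X"
  unfolding is_diag_def
proof (intro allI impI)
  fix p q :: 'n assume pq: "p \<noteq> q"
  have "trace (C ** (X ** E q p - E q p ** X)) = trace ((C ** X - X ** C) ** E q p)"
    by (simp add: mm_ldiff mm_rdiff trace_sub matrix_mul_assoc) (metis trace_cyc3)
  also have "\<dots> = (C ** X - X ** C) $ p $ q" by (rule trace_E)
  also have "\<dots> = X$p$q * (C$p$p - C$q$q)"
    using C by (simp add: is_diag_reg_def diag_left diag_right algebra_simps)
  finally have "X$p$q * (C$p$p - C$q$q) = 0" using H offdiag_E pq by (metis)
  then show "X$p$q = 0" using C pq by (simp add: is_diag_reg_def)
qed

lemma commB:
  fixes C X B :: "'n::finite mat"
  assumes C: "is_diag_reg C" and X: "is_diag X"
    and H: "\<forall>M. is_offdiag M \<longrightarrow> - trace (C ** B ** (X ** M - M ** X)) - trace (C ** M ** (X ** B - B ** X)) = 0"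
  shows "B ** X = X ** (B::'n::finite mat)"
proof -
  have Cd: "is_diag C" using C by (simp add: is_diag_reg_def)
  have key: "- trace (C ** B ** (X ** M - M ** X)) - trace (C ** M ** (X ** B - B ** X))
     = trace ((X ** C ** B - C ** B ** X - X ** B ** C + B ** X ** C) ** M)" for M
  proof -
    have 1: "trace (C ** B ** M ** X) = trace (X ** C ** B ** M)"
      by (metis trace_mul_sym matrix_mul_assoc)
    have 2: "trace (C ** M ** X ** B) = trace (X ** B ** C ** M)"
      by (metis trace_mul_sym matrix_mul_assoc)
    have 3: "trace (C ** M ** B ** X) = trace (B ** X ** C ** M)"
      by (metis trace_mul_sym matrix_mul_assoc)
    show ?thesis
      by (simp add: mm_ldiff mm_rdiff mm_rdistrib trace_sub trace_add 1 2 3 matrix_mul_assoc)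
  qed
  show ?thesis
  proof (simp add: vec_eq_iff, intro allI)
    fix p q :: 'n
    show "(B ** X) $ p $ q = (X ** B) $ p $ q"
    proof (cases "p = q")
      case True then show ?thesis using X by (simp add: diag_left diag_right mult.commute)
    next
      case False
      have "trace ((X ** C ** B - C ** B ** X - X ** B ** C + B ** X ** C) ** E q p) = 0"
        using H offdiag_E[of q p] False key by metis
      then have "(X ** C ** B - C ** B ** X - X ** B ** C + B ** X ** C) $ p $ q = 0"
        by (simp add: trace_E)
      then have "B$p$q * (X$p$p - X$q$q) * (C$p$p - C$q$q) = 0"
        using X Cd by (simp add: diag_left diag_right matrix_mul_assoc[symmetric] algebra_simps)
           (simp add: diag_left diag_right X Cd matrix_mul_assoc algebra_simps)
      then have "B$p$q * (X$p$p - X$q$q) = 0" using C False by (simp add: is_diag_reg_def)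
      then show ?thesis using X by (simp add: diag_left diag_right algebra_simps) metis
    qed
  qed
qed


lemma comm_sum: "(\<And>i. i \<in> S \<Longrightarrow> f i ** X = X ** f i) \<Longrightarrow> (\<Sum>i\<in>S. f i) ** X = X ** (\<Sum>i\<in>S. f i :: 'n::finite mat)"
  by (simp add: mm_sum_left mm_sum_right)
lemma comm_mul: "A ** X = X ** A \<Longrightarrow> B ** X = X ** B \<Longrightarrow> (A ** B) ** X = X ** ((A::'n::finite mat) ** B)"
  by (metis matrix_mul_assoc)
lemma comm_neg: "A ** X = X ** A \<Longrightarrow> (- A) ** X = X ** (- (A::'n::finite mat))"
  by (simp add: mm_lneg mm_rneg)

definition commr :: "nat \<Rightarrow> (nat \<Rightarrow> 'n::finite mat) \<Rightarrow> 'n mat \<Rightarrow> nat \<Rightarrow> bool"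
  where "commr k b0 X r \<longleftrightarrow> (\<forall>s. 1 \<le> s \<and> s \<le> r \<longrightarrow> bser k b0 s ** X = X ** bser k b0 s)"

lemma commr_bser: "commr k b0 X r \<Longrightarrow> s \<le> r \<Longrightarrow> bser k b0 s ** X = X ** bser k b0 s"
  by (cases "s = 0") (auto simp: commr_def bser_def)

lemma F1: assumes "commr k b0 X r" shows "s \<le> r \<Longrightarrow> tinv k b0 s ** X = X ** tinv k b0 s"
proof (induction s rule: less_induct)
  case (less s)
  show ?case
  proof (cases s)
    case 0 then show ?thesis by simp
  next
    case (Suc j)
    have "(\<Sum>i\<in>{1..Suc j}. bser k b0 i ** tinv k b0 (Suc j - i)) ** X = X ** (\<Sum>i\<in>{1..Suc j}. bser k b0 i ** tinv k b0 (Suc j - i))"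
      by (rule comm_sum, rule comm_mul, rule commr_bser[OF assms]) (use less Suc in auto)
    then show ?thesis unfolding Suc tinv.simps by (rule comm_neg)
  qed
qed

lemma F2: assumes "commr k b0 X r" "s \<le> r" shows "Vs k X b0 s = (if s = 0 then X else 0)"
proof -
  have "Vs k X b0 s = (\<Sum>a=0..s. tinv k b0 a ** (X ** bser k b0 (s - a)))"
    unfolding Vs_def cm_def[of "tinv k b0"] by (simp add: cm_cst_left)
  also have "\<dots> = (\<Sum>a=0..s. tinv k b0 a ** bser k b0 (s - a)) ** X"
    unfolding mm_sum_left
    by (rule sum.cong[OF refl]) (metis commr_bser[OF assms(1)] assms(2) diff_le_self le_trans matrix_mul_assoc)
  also have "\<dots> = sone s ** X" using fun_cong[OF tinv_bser[of k b0], of s] by (simp add: cm_def)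
  finally show ?thesis by (simp add: sone_def)
qed

lemma F3: assumes "commr k b0 X (r - 1)" "r \<ge> 1"
  shows "Vs k X b0 r = X ** bser k b0 r - bser k b0 r ** X"
proof -
  let ?t = "tinv k b0" and ?\<beta> = "bser k b0"
  have s0: "(\<Sum>a=0..r. ?t a ** ?\<beta> (r - a)) = 0"
    using tinv_bser[of k b0] assms(2) by (simp add: cm_def fun_eq_iff sone_def)
  have "Vs k X b0 r = (\<Sum>a=0..r. ?t a ** (X ** ?\<beta> (r - a)))"
    unfolding Vs_def cm_def[of "tinv k b0"] by (simp add: cm_cst_left)
  also have "\<dots> = X ** ?\<beta> r + (\<Sum>a=1..r. ?t a ** (X ** ?\<beta> (r - a)))"
    by (simp add: sum.atLeast_Suc_atMost)
  also have "(\<Sum>a=1..r. ?t a ** (X ** ?\<beta> (r - a))) = (\<Sum>a=1..r. ?t a ** ?\<beta> (r - a)) ** X"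
    unfolding mm_sum_left
  proof (rule sum.cong[OF refl])
    fix a assume "a \<in> {1..r}"
    then have "r - a \<le> r - 1" by auto
    then show "?t a ** (X ** ?\<beta> (r - a)) = ?t a ** ?\<beta> (r - a) ** X"
      by (metis commr_bser[OF assms(1)] matrix_mul_assoc)
  qed
  also have "(\<Sum>a=1..r. ?t a ** ?\<beta> (r - a)) = - ?\<beta> r"
  proof -
    have "(\<Sum>a=0..r. ?t a ** ?\<beta> (r - a)) = ?\<beta> r + (\<Sum>a=1..r. ?t a ** ?\<beta> (r - a))"
      by (subst sum.atLeast_Suc_atMost) simp_all
    with s0 have h: "?\<beta> r + (\<Sum>a=1..r. ?t a ** ?\<beta> (r - a)) = 0" by simp
    show ?thesis using minus_unique[OF h] by simp
  qed
  finally show ?thesis by (simp add: mm_lneg)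
qed

lemma F4: assumes "commr k b0 X (r - 1)" "r \<ge> 1"
  shows "\<exists>R. tinv k b0 r = - bser k b0 r + R \<and> R ** X = X ** R"
proof -
  obtain j where r: "r = Suc j" using assms(2) by (cases r) auto
  let ?R = "- (\<Sum>i\<in>{1..j}. bser k b0 i ** tinv k b0 (Suc j - i))"
  have "tinv k b0 r = - (bser k b0 (Suc j) ** tinv k b0 0 + (\<Sum>i\<in>{1..j}. bser k b0 i ** tinv k b0 (Suc j - i)))"
    unfolding r tinv.simps by (simp add: sum.atLeast_Suc_atMost add.commute)
  then have 1: "tinv k b0 r = - bser k b0 r + ?R" using r by simp
  have "(\<Sum>i\<in>{1..j}. bser k b0 i ** tinv k b0 (Suc j - i)) ** X = X ** (\<Sum>i\<in>{1..j}. bser k b0 i ** tinv k b0 (Suc j - i))"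
    by (rule comm_sum, rule comm_mul, rule commr_bser[OF assms(1)], use r in simp, rule F1[OF assms(1)]) (use r in auto)
  then have "?R ** X = X ** ?R" by (rule comm_neg)
  with 1 show ?thesis by blast
qed

lemma mono_right: "(f \<star> mono i M) n = (if i \<le> n then f (n - i) ** M else 0)"
proof -
  have "(f \<star> mono i M) n = (\<Sum>a=0..n. if a = n - i \<and> i \<le> n then f a ** M else 0)"
    unfolding cm_def mono_def by (rule sum.cong) auto
  then show ?thesis by (simp add: sum.delta')
qed

lemma cst_mono: "cst X \<star> mono i M = mono i (X ** M)"
  by (rule ext) (simp add: cm_cst_left mono_def)

lemma Wcoef:
  assumes "i \<le> n"
  shows "(tinv k b0 \<star> (cst X \<star> mono i M) - tinv k b0 \<star> mono i M \<star> Vs k X b0) n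
     = tinv k b0 (n - i) ** (X ** M) - (\<Sum>a=0..n-i. tinv k b0 a ** M ** Vs k X b0 (n - i - a))"
proof -
  let ?t = "tinv k b0" and ?V = "Vs k X b0"
  obtain s where n: "n = i + s" using assms le_Suc_ex by blast
  have "(?t \<star> mono i M \<star> ?V) n = (\<Sum>c=0..n. (if i \<le> c then ?t (c - i) ** M else 0) ** ?V (n - c))"
    unfolding cm_def[of "?t \<star> mono i M"] mono_right ..
  also have "\<dots> = (\<Sum>c\<in>{0..n} \<inter> {c. i \<le> c}. ?t (c - i) ** M ** ?V (n - c))"
    by (subst sum.inter_restrict) (auto intro!: sum.cong)
  also have "{0..n} \<inter> {c. i \<le> c} = {0 + i..s + i}" using n by auto
  also have "(\<Sum>c\<in>{0 + i..s + i}. ?t (c - i) ** M ** ?V (n - c)) = (\<Sum>a=0..s. ?t a ** M ** ?V (n - i - a))"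
    by (subst sum.shift_bounds_cl_nat_ivl) (simp add: n)
  finally have 2: "(?t \<star> mono i M \<star> ?V) n = (\<Sum>a=0..n-i. ?t a ** M ** ?V (n - i - a))" using n by simp
  have 1: "(?t \<star> (cst X \<star> mono i M)) n = ?t (n - i) ** (X ** M)"
    unfolding cst_mono mono_right using assms by simp
  show ?thesis unfolding minus_apply 1 2 ..
qed


lemma Wlow: assumes "n < i"
  shows "(tinv k b0 \<star> (cst X \<star> mono i M) - tinv k b0 \<star> mono i M \<star> Vs k X b0) n = 0"
proof -
  have "(tinv k b0 \<star> mono i M \<star> Vs k X b0) n = 0"
    unfolding cm_def[of "tinv k b0 \<star> mono i M"] mono_right using assms by simp
  moreover have "(tinv k b0 \<star> (cst X \<star> mono i M)) n = 0"
    unfolding cst_mono mono_right using assms by simp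
  ultimately show ?thesis by simp
qed

lemma termA:
  assumes cr: "commr k b0 X r" and X: "is_diag X" and Cd: "is_diag D"
    and n: "i \<le> n" "n - i \<le> r"
  shows "trace (D ** (tinv k b0 \<star> (cst X \<star> mono i M) - tinv k b0 \<star> mono i M \<star> Vs k X b0) n) = 0"
proof -
  let ?t = "tinv k b0" and ?V = "Vs k X b0"
  have "(\<Sum>a=0..n-i. ?t a ** M ** ?V (n - i - a)) = (\<Sum>a=0..n-i. if a = n - i then ?t a ** M ** X else 0)"
    by (rule sum.cong[OF refl]) (use F2[OF cr] n in auto)
  also have "\<dots> = ?t (n - i) ** M ** X" by simp
  finally have "(?t \<star> (cst X \<star> mono i M) - ?t \<star> mono i M \<star> ?V) n = ?t (n - i) ** (X ** M - M ** X)"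
    unfolding Wcoef[OF n(1)] by (simp add: mm_ldiff matrix_mul_assoc)
  then have "trace (D ** (?t \<star> (cst X \<star> mono i M) - ?t \<star> mono i M \<star> ?V) n)
     = trace ((D ** ?t (n - i)) ** (X ** M - M ** X))" by (simp add: matrix_mul_assoc)
  also have "\<dots> = 0"
    by (rule trace_comm_zero, rule comm_mul, rule diag_comm[OF Cd X], rule F1[OF cr]) (use n in auto)
  finally show ?thesis .
qed

lemma termB:
  assumes cr: "commr k b0 X (r - 1)" and r: "r \<ge> 1" and X: "is_diag X" and Cd: "is_diag D"
    and n: "n = i + r"
  shows "trace (D ** (tinv k b0 \<star> (cst X \<star> mono i M) - tinv k b0 \<star> mono i M \<star> Vs k X b0) n)
     = - trace (D ** bser k b0 r ** (X ** M - M ** X)) - trace (D ** M ** (X ** bser k b0 r - bser k b0 r ** X))"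
proof -
  let ?t = "tinv k b0" and ?V = "Vs k X b0" and ?\<beta> = "bser k b0 r"
  obtain R where R: "?t r = - ?\<beta> + R" "R ** X = X ** R" using F4[OF cr r] by blast
  have "(\<Sum>a=0..r. ?t a ** M ** ?V (r - a)) = (\<Sum>a\<in>{0, r}. ?t a ** M ** ?V (r - a))"
  proof (rule sum.mono_neutral_right)
    show "\<forall>a\<in>{0..r} - {0, r}. ?t a ** M ** ?V (r - a) = 0"
    proof
      fix a assume "a \<in> {0..r} - {0, r}"
      then have "r - a \<le> r - 1" "r - a \<noteq> 0" by auto
      then show "?t a ** M ** ?V (r - a) = 0" using F2[OF cr] by simp
    qed
  qed auto
  also have "\<dots> = M ** ?V r + ?t r ** M ** X"
    using r F2[OF cr, of 0] by simp
  finally have S: "(\<Sum>a=0..r. ?t a ** M ** ?V (r - a)) = M ** ?V r + ?t r ** M ** X" .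
  have W: "(?t \<star> (cst X \<star> mono i M) - ?t \<star> mono i M \<star> ?V) n
      = (- ?\<beta>) ** (X ** M - M ** X) + R ** (X ** M - M ** X) - M ** (X ** ?\<beta> - ?\<beta> ** X)"
  proof -
    have le: "i \<le> n" using n by simp
    have "(?t \<star> (cst X \<star> mono i M) - ?t \<star> mono i M \<star> ?V) n = ?t r ** (X ** M) - (M ** ?V r + ?t r ** M ** X)"
      using Wcoef[OF le, of k b0 X M] S n by simp
    also have "\<dots> = (- ?\<beta> + R) ** (X ** M) - (M ** (X ** ?\<beta> - ?\<beta> ** X) + (- ?\<beta> + R) ** M ** X)"
      unfolding R(1) F3[OF cr r] ..
    also have "\<dots> = (- ?\<beta>) ** (X ** M - M ** X) + R ** (X ** M - M ** X) - M ** (X ** ?\<beta> - ?\<beta> ** X)"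
      by (simp add: mm_ldiff mm_rdiff mm_rdistrib mm_lneg matrix_add_ldistrib matrix_mul_assoc algebra_simps)
    finally show ?thesis .
  qed
  have Z: "trace (D ** (R ** (X ** M - M ** X))) = 0"
    by (subst matrix_mul_assoc, rule trace_comm_zero, rule comm_mul, rule diag_comm[OF Cd X], rule R(2))
  have Z': "trace (D ** R ** X ** M) = trace (D ** R ** M ** X)"
    using Z by (simp add: mm_ldiff trace_sub matrix_mul_assoc)
  show ?thesis unfolding W
    by (simp add: matrix_add_ldistrib mm_ldiff trace_add trace_sub Z' mm_rneg mm_lneg trace_neg matrix_mul_assoc)
qed

lemma PhiW_split: "k \<ge> 1 \<Longrightarrow> PhiW k C W = (\<Sum>l=1..k-1. trace (C l ** W (l - 1))) + trace (C k ** W (k - 1))"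
  unfolding PhiW_def by (cases k) (simp_all add: sum.cl_ivl_Suc)


lemma Lzero:
  assumes k: "k \<ge> 1" and X: "is_diag X" and C: "\<forall>l. 1 \<le> l \<and> l \<le> k \<longrightarrow> is_diag (C l)"
    and cr: "commr k b0 X (k - 1 - m)" and i: "m \<le> i" "i < k"
  shows "LinF k C X b0 (mono i M) = 0"
  unfolding LinF_def PhiW_def
proof (rule sum.neutral, rule ballI)
  fix l assume l: "l \<in> {1..k}"
  show "trace (C l ** (tinv k b0 \<star> (cst X \<star> mono i M) - tinv k b0 \<star> mono i M \<star> Vs k X b0) (l - 1)) = 0"
  proof (cases "l - 1 < i")
    case True then show ?thesis by (subst Wlow) (auto simp: trace_zero)
  next
    case False
    show ?thesis by (rule termA[OF cr X]) (use C l False i in auto)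
  qed
qed

lemma commr0: "commr k b0 X 0" by (simp add: commr_def)

lemma Lk1:
  assumes k: "k \<ge> 1"
  shows "LinF k C X b0 (mono (k - 1) M) = trace (C k ** (X ** M - M ** X))"
proof -
  have "(\<Sum>l=1..k-1. trace (C l ** (tinv k b0 \<star> (cst X \<star> mono (k - 1) M) - tinv k b0 \<star> mono (k - 1) M \<star> Vs k X b0) (l - 1))) = 0"
    by (intro sum.neutral ballI, subst Wlow) (auto simp: trace_zero)
  moreover have "(tinv k b0 \<star> (cst X \<star> mono (k - 1) M) - tinv k b0 \<star> mono (k - 1) M \<star> Vs k X b0) (k - 1) = X ** M - M ** X"
    using Wcoef[of "k - 1" "k - 1" k b0 X M] F2[OF commr0[of k b0 X], of 0] by simp
  ultimately show ?thesis unfolding LinF_def PhiW_split[OF k] by simp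
qed

lemma Lr:
  assumes k: "k \<ge> r + 1" and r: "r \<ge> 1" and cr: "commr k b0 X (r - 1)" and X: "is_diag X"
    and C: "\<forall>l. 1 \<le> l \<and> l \<le> k \<longrightarrow> is_diag (C l)"
  shows "LinF k C X b0 (mono (k - 1 - r) M) = - trace (C k ** bser k b0 r ** (X ** M - M ** X)) - trace (C k ** M ** (X ** bser k b0 r - bser k b0 r ** X))"
proof -
  let ?i = "k - 1 - r"
  let ?W = "tinv k b0 \<star> (cst X \<star> mono ?i M) - tinv k b0 \<star> mono ?i M \<star> Vs k X b0"
  have "(\<Sum>l=1..k-1. trace (C l ** ?W (l - 1))) = 0"
  proof (rule sum.neutral, rule ballI)
    fix l assume l: "l \<in> {1..k-1}"
    show "trace (C l ** ?W (l - 1)) = 0"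
    proof (cases "l - 1 < ?i")
      case True then show ?thesis by (subst Wlow) (auto simp: trace_zero)
    next
      case False
      show ?thesis by (rule termA[OF cr X]) (use C l False k in auto)
    qed
  qed
  moreover have "trace (C k ** ?W (k - 1)) = - trace (C k ** bser k b0 r ** (X ** M - M ** X)) - trace (C k ** M ** (X ** bser k b0 r - bser k b0 r ** X))"
    by (rule termB[OF cr r X]) (use C k in auto)
  moreover have k1: "k \<ge> 1" using k by simp
  ultimately show ?thesis unfolding LinF_def PhiW_split[OF k1] by simp
qed

lemma part2core:
  assumes k: "k \<ge> 2" and C: "\<forall>l. 1 \<le> l \<and> l \<le> k \<longrightarrow> is_diag (C l)" and Ck: "is_diag_reg (C k)"
    and m: "m = (k + 1) div 2"
  shows "(\<forall>i M. m \<le> i \<and> i < k \<and> is_offdiag M \<longrightarrow> LinF k C X b0 (mono i M) = 0)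
      \<longleftrightarrow> (is_diag X \<and> commr k b0 X (k - 1 - m))"
proof
  assume H: "\<forall>i M. m \<le> i \<and> i < k \<and> is_offdiag M \<longrightarrow> LinF k C X b0 (mono i M) = 0"
  have X: "is_diag X"
  proof (rule diagX[OF Ck], intro allI impI)
    fix M :: "'a mat" assume "is_offdiag M"
    then have "LinF k C X b0 (mono (k - 1) M) = 0" using H k m by auto
    then show "trace (C k ** (X ** M - M ** X)) = 0" using Lk1[of k C X b0 M] k by simp
  qed
  have "r \<le> k - 1 - m \<Longrightarrow> commr k b0 X r" for r
  proof (induction r)
    case 0 show ?case by (rule commr0)
  next
    case (Suc r)
    then have cr: "commr k b0 X (Suc r - 1)" by simp
    have "bser k b0 (Suc r) ** X = X ** bser k b0 (Suc r)"
    proof (rule commB[OF Ck X], intro allI impI)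
      fix M :: "'a mat" assume "is_offdiag M"
      then have "LinF k C X b0 (mono (k - 1 - Suc r) M) = 0" using H Suc.prems k m by auto
      then show "- trace (C k ** bser k b0 (Suc r) ** (X ** M - M ** X)) - trace (C k ** M ** (X ** bser k b0 (Suc r) - bser k b0 (Suc r) ** X)) = 0"
        using Lr[OF _ _ cr X C] Suc.prems k by simp
    qed
    then show ?case using Suc.IH Suc.prems by (auto simp: commr_def le_Suc_eq)
  qed
  then show "is_diag X \<and> commr k b0 X (k - 1 - m)" using X by simp
next
  assume "is_diag X \<and> commr k b0 X (k - 1 - m)"
  then show "\<forall>i M. m \<le> i \<and> i < k \<and> is_offdiag M \<longrightarrow> LinF k C X b0 (mono i M) = 0"
    using Lzero[of k X C b0 m] C k by auto
qed


lemma cm_cst_right: "(h \<star> cst A) n = h n ** A"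
proof -
  have "(h \<star> cst A) n = (\<Sum>i=0..n. if i = n then h i ** A else 0)"
    unfolding cm_def cst_def by (rule sum.cong) auto
  then show ?thesis by simp
qed

lemma mono_cst_right: "mono q B \<star> cst A = mono q (B ** A)"
  by (rule ext) (simp add: cm_cst_right mono_def)

lemma mono_diff: "mono i (M - N) = mono i M - mono i N"
  by (rule ext) (simp add: mono_def)

lemma ordge_mono_s: "ordge q (mono q B)" by (simp add: ordge_def mono_def)

lemma PhiW_cst: "k \<ge> 1 \<Longrightarrow> PhiW k C (cst X) = trace (C 1 ** X)"
proof -
  assume k: "k \<ge> 1"
  have "PhiW k C (cst X) = (\<Sum>l=1..k. if l = 1 then trace (C 1 ** X) else 0)"
    unfolding PhiW_def by (rule sum.cong) (auto simp: cst_def trace_zero)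
  then show ?thesis using k by simp
qed

lemma phi_quad:
  fixes b1 :: "nat \<Rightarrow> 'n::finite mat"
  assumes kq: "k = 2 * q + 1" and q: "q \<ge> 1" and X: "is_diag X"
    and C: "\<forall>l. 1 \<le> l \<and> l \<le> k \<longrightarrow> is_diag (C l)"
    and bq: "b1 q = B" and bc: "\<forall>s. 1 \<le> s \<and> s < q \<longrightarrow> b1 s ** X = X ** b1 s"
    and bz: "\<forall>s. q < s \<longrightarrow> b1 s = 0"
  shows "phi k C X b1 = trace (C 1 ** X) + trace (C k ** (B ** (B ** X - X ** B)))"
proof -
  let ?b2 = "lowp q b1"
  let ?\<beta>1 = "bser k b1" and ?\<beta>2 = "bser k ?b2" and ?t1 = "tinv k b1" and ?t2 = "tinv k ?b2"
  let ?cX = "cst X"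
  define \<delta> where "\<delta> = mono q B"
  have k1: "k \<ge> 1" using kq by simp
  have \<beta>: "?\<beta>1 = ?\<beta>2 + \<delta>"
  proof
    fix n show "?\<beta>1 n = (?\<beta>2 + \<delta>) n"
      unfolding plus_fun_apply \<delta>_def using bq bz kq q
      by (cases "n < q") (auto simp: bser_def lowp_def mono_def)
  qed
  have allc: "commr k ?b2 X r" for r
    unfolding commr_def using bc by (auto simp: bser_def lowp_def)
  have t2c: "?t2 s ** X = X ** ?t2 s" for s by (rule F1[OF allc order_refl])
  have cXb: "?cX \<star> ?\<beta>2 = ?\<beta>2 \<star> ?cX"
    by (rule ext) (simp add: cm_cst_left cm_cst_right commr_bser[OF allc order_refl])
  define s2 where "s2 = ?t2 - ?t2 \<star> \<delta> \<star> ?t2 + ?t2 \<star> \<delta> \<star> ?t2 \<star> \<delta> \<star> ?t2"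
  have od: "ordge q \<delta>" unfolding \<delta>_def by (rule ordge_mono_s)
  have o0: "ordge 0 f" for f :: "nat \<Rightarrow> 'n mat" by (rule ordge_zero)
  have "?\<beta>1 \<star> s2 = sone + \<delta> \<star> ?t2 \<star> \<delta> \<star> ?t2 \<star> \<delta> \<star> ?t2"
    unfolding s2_def \<beta>
    by (simp add: cm_add_left cm_add_right cm_diff_right cm_assoc[symmetric] bser_tinv cm_one_left)
  moreover have "ordge k (\<delta> \<star> ?t2 \<star> \<delta> \<star> ?t2 \<star> \<delta> \<star> ?t2)"
  proof -
    have "ordge (q + 0 + q + 0 + q + 0) (\<delta> \<star> ?t2 \<star> \<delta> \<star> ?t2 \<star> \<delta> \<star> ?t2)"
      by (intro cm_ordge od o0)
    then show ?thesis by (rule ordge_mono) (use kq q in simp)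
  qed
  ultimately have "eqk k (?\<beta>1 \<star> s2) sone" by (simp add: eqk_def ordge_def)
  then have ts: "eqk k ?t1 s2" by (rule inv_unique[OF tinv_bser])
  have s2b: "s2 \<star> ?\<beta>2 = sone - ?t2 \<star> \<delta> + ?t2 \<star> \<delta> \<star> ?t2 \<star> \<delta>"
    unfolding s2_def by (simp add: cm_add_left cm_diff_left cm_assoc tinv_bser cm_one_right)
  define T6 where "T6 = ?t2 \<star> \<delta> \<star> ?t2 \<star> \<delta> \<star> ?t2 \<star> (?cX \<star> \<delta>)"
  have W: "s2 \<star> (?cX \<star> ?\<beta>1) = ?cX + ?t2 \<star> mono q (X ** B - B ** X)
       + ?t2 \<star> \<delta> \<star> ?t2 \<star> mono q (B ** X - X ** B) + T6"
  proof -
    have "s2 \<star> (?cX \<star> ?\<beta>1) = (s2 \<star> ?\<beta>2) \<star> ?cX + s2 \<star> (?cX \<star> \<delta>)"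
      unfolding \<beta> by (simp add: cm_add_right cXb cm_assoc)
    also have "\<dots> = ?cX - ?t2 \<star> \<delta> \<star> ?cX + ?t2 \<star> \<delta> \<star> ?t2 \<star> \<delta> \<star> ?cX
        + (?t2 \<star> (?cX \<star> \<delta>) - ?t2 \<star> \<delta> \<star> ?t2 \<star> (?cX \<star> \<delta>) + T6)"
      by (simp only: s2b) (simp add: s2_def T6_def cm_add_left cm_diff_left cm_one_left)
    also have "\<dots> = ?cX + ?t2 \<star> (?cX \<star> \<delta> - \<delta> \<star> ?cX)
       + ?t2 \<star> \<delta> \<star> ?t2 \<star> (\<delta> \<star> ?cX - ?cX \<star> \<delta>) + T6"
      by (simp add: cm_diff_right cm_assoc algebra_simps)
    also have "?cX \<star> \<delta> - \<delta> \<star> ?cX = mono q (X ** B - B ** X)"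
      unfolding \<delta>_def cst_mono mono_cst_right mono_diff ..
    also have "\<delta> \<star> ?cX - ?cX \<star> \<delta> = mono q (B ** X - X ** B)"
      unfolding \<delta>_def cst_mono mono_cst_right mono_diff ..
    finally show ?thesis .
  qed
  have P6: "PhiW k C T6 = 0"
  proof -
    have "ordge (0 + q + 0 + q + 0 + (0 + q)) T6" unfolding T6_def
      by (intro cm_ordge od o0)
    then have "ordge k T6" by (rule ordge_mono) (use kq q in simp)
    then have "eqk k T6 0" by (simp add: eqk_def ordge_def)
    then show ?thesis by (simp add: PhiW_eqk PhiW_zero)
  qed
  have P2: "PhiW k C (?t2 \<star> mono q (X ** B - B ** X)) = 0"
    unfolding PhiW_def
  proof (rule sum.neutral, rule ballI)
    fix l assume l: "l \<in> {1..k}"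
    show "trace (C l ** (?t2 \<star> mono q (X ** B - B ** X)) (l - 1)) = 0"
    proof (cases "q \<le> l - 1")
      case True
      have "trace (C l ** (?t2 \<star> mono q (X ** B - B ** X)) (l - 1)) = trace ((C l ** ?t2 (l - 1 - q)) ** (X ** B - B ** X))"
        using True by (simp add: mono_right matrix_mul_assoc)
      also have "\<dots> = 0"
        by (rule trace_comm_zero, rule comm_mul, rule diag_comm) (use C l X t2c in auto)
      finally show ?thesis .
    qed (simp add: mono_right trace_zero)
  qed
  have P3: "PhiW k C (?t2 \<star> \<delta> \<star> ?t2 \<star> mono q (B ** X - X ** B)) = trace (C k ** (B ** (B ** X - X ** B)))"
  proof -
    let ?f = "?t2 \<star> \<delta> \<star> ?t2"
    let ?N = "B ** X - X ** B"
    have of: "ordge (0 + q + 0 + q) (?f \<star> mono q ?N)" by (intro cm_ordge od o0 ordge_mono_s)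
    have low: "(\<Sum>l=1..k-1. trace (C l ** (?f \<star> mono q ?N) (l - 1))) = 0"
      by (rule sum.neutral) (use of kq in \<open>auto simp: ordge_def trace_zero\<close>)
    have fq: "?f q = B"
    proof -
      have "?f q = (\<Sum>c=0..q. (if q \<le> c then ?t2 (c - q) ** B else 0) ** ?t2 (q - c))"
        unfolding cm_def[of "?t2 \<star> \<delta>"] unfolding \<delta>_def mono_right ..
      also have "\<dots> = (\<Sum>c=0..q. if c = q then B else 0)"
        by (rule sum.cong) auto
      finally show ?thesis by simp
    qed
    have "(?f \<star> mono q ?N) (k - 1) = B ** ?N"
      using kq fq by (simp add: mono_right)
    then show ?thesis using low unfolding PhiW_split[OF k1] by simp
  qed
  have "phi k C X b1 = PhiW k C (?t1 \<star> (?cX \<star> ?\<beta>1))" by (rule phi_eq[OF k1])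
  also have "\<dots> = PhiW k C (s2 \<star> (?cX \<star> ?\<beta>1))"
    by (rule PhiW_eqk, rule cm_eqk[OF ts eqk_refl])
  also have "\<dots> = trace (C 1 ** X) + trace (C k ** (B ** (B ** X - X ** B)))"
    unfolding W PhiW_add PhiW_cst[OF k1] P2 P3 P6 by simp
  finally show ?thesis .
qed


lemma trace_diag_left: "is_diag D \<Longrightarrow> trace (D ** Y) = (\<Sum>p\<in>UNIV. D$p$p * Y$p$p)"
  by (simp add: trace_def diag_left)

lemma Qf_entry:
  fixes D X B :: "'n::finite mat"
  assumes D: "is_diag D" and X: "is_diag X"
  shows "trace (D ** (B ** (B ** X - X ** B))) = (\<Sum>p\<in>UNIV. \<Sum>q\<in>UNIV. D$p$p * (X$p$p - X$q$q) * B$p$q * B$q$p)"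
  unfolding trace_diag_left[OF D]
  by (simp add: matrix_matrix_mult_def[of B "B ** X - X ** B"] diag_left[OF X] diag_right[OF X]
      sum_distrib_left algebra_simps)

lemma pair_sum:
  fixes g :: "'n::{finite,linorder} \<Rightarrow> 'n \<Rightarrow> complex"
  assumes g: "\<And>p. g p p = 0"
  shows "(\<Sum>p\<in>UNIV. \<Sum>q\<in>UNIV. g p q) = (\<Sum>p\<in>UNIV. \<Sum>q\<in>UNIV. if q < p then g p q + g q p else 0)"
proof -
  have "(\<Sum>p\<in>UNIV. \<Sum>q\<in>UNIV. g p q) = (\<Sum>p\<in>UNIV. \<Sum>q\<in>UNIV. (if q < p then g p q else 0) + (if p < q then g p q else 0))"
    by (intro sum.cong refl) (use g in \<open>auto simp: not_less_iff_gr_or_eq\<close>)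
  also have "\<dots> = (\<Sum>p\<in>UNIV. \<Sum>q\<in>UNIV. if q < p then g p q else 0) + (\<Sum>p\<in>UNIV. \<Sum>q\<in>UNIV. if p < q then g p q else 0)"
    by (simp add: sum.distrib)
  finally have 1: "(\<Sum>p\<in>UNIV. \<Sum>q\<in>UNIV. g p q) = (\<Sum>p\<in>UNIV. \<Sum>q\<in>UNIV. if q < p then g p q else 0) + (\<Sum>p\<in>UNIV. \<Sum>q\<in>UNIV. if p < q then g p q else 0)" .
  have "(\<Sum>p\<in>UNIV. \<Sum>q\<in>UNIV. if p < q then g p q else 0) = (\<Sum>q\<in>UNIV. \<Sum>p\<in>UNIV. if p < q then g p q else 0)"
    by (rule sum.swap)
  then have 2: "(\<Sum>p\<in>UNIV. \<Sum>q\<in>UNIV. if p < q then g p q else 0) = (\<Sum>p\<in>UNIV. \<Sum>q\<in>UNIV. if q < p then g q p else 0)" by simp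
  have 3: "(\<Sum>p\<in>UNIV. \<Sum>q\<in>UNIV. if q < p then g p q else 0) + (\<Sum>p\<in>UNIV. \<Sum>q\<in>UNIV. if q < p then g q p else 0)
     = (\<Sum>p\<in>UNIV. \<Sum>q\<in>UNIV. if q < p then g p q + g q p else 0)"
    by (simp add: sum.distrib[symmetric]) (intro sum.cong refl, auto)
  show ?thesis using 1 2 3 by simp
qed

definition Lf :: "'n::{finite,linorder} mat \<Rightarrow> 'n mat \<Rightarrow> 'n mat \<Rightarrow> 'n mat \<Rightarrow> complex"
  where "Lf D X bl bu = (\<Sum>p\<in>UNIV. \<Sum>q\<in>UNIV. if q < p then (D$p$p - D$q$q) * (X$p$p - X$q$q) * bl$p$q * bu$q$p else 0)"

lemma Qf_eq:
  fixes D X bl bu :: "'n::{finite,linorder} mat"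
  assumes D: "is_diag D" and X: "is_diag X" and L: "strictly_lower bl" and U: "strictly_upper bu"
  shows "trace (D ** ((bl + bu) ** ((bl + bu) ** X - X ** (bl + bu)))) = Lf D X bl bu"
proof -
  let ?B = "bl + bu"
  let ?g = "\<lambda>p q. D$p$p * (X$p$p - X$q$q) * ?B$p$q * ?B$q$p"
  have "trace (D ** (?B ** (?B ** X - X ** ?B))) = (\<Sum>p\<in>UNIV. \<Sum>q\<in>UNIV. ?g p q)"
    by (rule Qf_entry[OF D X])
  also have "\<dots> = (\<Sum>p\<in>UNIV. \<Sum>q\<in>UNIV. if q < p then ?g p q + ?g q p else 0)"
    by (rule pair_sum) simp
  also have "\<dots> = Lf D X bl bu" unfolding Lf_def
  proof (intro sum.cong refl)
    fix p q :: 'n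
    show "(if q < p then ?g p q + ?g q p else 0) = (if q < p then (D$p$p - D$q$q) * (X$p$p - X$q$q) * bl$p$q * bu$q$p else 0)"
    proof (cases "q < p")
      case True
      then have "bu$p$q = 0" "bl$q$p = 0" using L U by (auto simp: strictly_lower_def strictly_upper_def)
      then show ?thesis using True by (simp add: algebra_simps)
    qed simp
  qed
  finally show ?thesis .
qed

lemma clinear_Lf: "clinear_fun (Lf D X bl)"
  unfolding clinear_fun_def
proof (intro conjI allI)
  fix x y show "Lf D X bl (x + y) = Lf D X bl x + Lf D X bl y"
    unfolding Lf_def sum.distrib[symmetric] by (intro sum.cong refl) (simp add: algebra_simps)
next
  fix c x show "Lf D X bl (cscale c x) = c * Lf D X bl x"
    unfolding Lf_def sum_distrib_left by (intro sum.cong refl) (simp add: cscale_def)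
qed

lemma Lf_zero: "Lf D X bl 0 = 0" unfolding Lf_def by (intro sum.neutral ballI) simp

lemma tst: "(0::'n::finite mat) $ q $ p = 0" by simp
lemma Lf_E: "Lf D X bl (E a b) = (if a < b then (D$b$b - D$a$a) * (X$b$b - X$a$a) * bl$b$a else 0)"
proof -
  have "Lf D X bl (E a b) = (\<Sum>p\<in>UNIV. \<Sum>q\<in>UNIV. if p = b \<and> q = a then (if q < p then (D$p$p - D$q$q) * (X$p$p - X$q$q) * bl$p$q else 0) else 0)"
    unfolding Lf_def E_def by (intro sum.cong refl) auto
  also have "\<dots> = (\<Sum>p\<in>UNIV. if p = b then (if a < p then (D$p$p - D$a$a) * (X$p$p - X$a$a) * bl$p$a else 0) else 0)"
  proof (intro sum.cong refl)
    fix p :: 'a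
    show "(\<Sum>q\<in>UNIV. if p = b \<and> q = a then (if q < p then (D$p$p - D$q$q) * (X$p$p - X$q$q) * bl$p$q else 0) else 0)
        = (if p = b then (if a < p then (D$p$p - D$a$a) * (X$p$p - X$a$a) * bl$p$a else 0) else 0)"
      by (cases "p = b") (simp_all add: sum.delta')
  qed
  finally show ?thesis by (simp add: sum.delta')
qed

lemma upper_E: "a < b \<Longrightarrow> strictly_upper (E a b)"
  by (auto simp: strictly_upper_def E_def)


lemma part3_iff:
  fixes D X bl :: "'n::{finite,linorder} mat"
  assumes D: "is_diag_reg D" and X: "is_diag X" and L: "strictly_lower bl"
  shows "(\<forall>bu bu'. strictly_upper bu \<and> strictly_upper bu' \<longrightarrow> Lf D X bl bu = Lf D X bl bu') \<longleftrightarrow> bl ** X = X ** bl"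
proof
  assume H: "\<forall>bu bu'. strictly_upper bu \<and> strictly_upper bu' \<longrightarrow> Lf D X bl bu = Lf D X bl bu'"
  have z: "(X$p$p - X$q$q) * bl$p$q = 0" if "q < p" for p q
  proof -
    have u0: "strictly_upper (0::'n mat)" by (simp add: strictly_upper_def)
    have "Lf D X bl (E q p) = Lf D X bl 0"
      using H upper_E[OF that] u0 by blast
    then have "(D$p$p - D$q$q) * (X$p$p - X$q$q) * bl$p$q = 0"
      using that by (simp add: Lf_E Lf_zero)
    moreover have "D$p$p - D$q$q \<noteq> 0" using D that by (auto simp: is_diag_reg_def)
    ultimately show ?thesis by simp
  qed
  have "(bl ** X)$p$q = (X ** bl)$p$q" for p q
  proof -
    have "bl$p$q * X$q$q = X$p$p * bl$p$q"
    proof (cases "q < p")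
      case True then show ?thesis using z[OF True] by (simp add: algebra_simps) metis
    next
      case False then have "bl$p$q = 0" using L by (auto simp: strictly_lower_def)
      then show ?thesis by simp
    qed
    then show ?thesis by (simp add: diag_left[OF X] diag_right[OF X])
  qed
  then show "bl ** X = X ** bl" by (simp add: vec_eq_iff)
next
  assume c: "bl ** X = X ** bl"
  have "(X$p$p - X$q$q) * bl$p$q = 0" for p q
    using arg_cong[OF c, of "\<lambda>A. A$p$q"] by (simp add: diag_left[OF X] diag_right[OF X] algebra_simps) metis
  then have "Lf D X bl bu = 0" for bu
    unfolding Lf_def by (intro sum.neutral ballI) (simp add: mult.commute mult.left_commute, blast)
  then show "\<forall>bu bu'. strictly_upper bu \<and> strictly_upper bu' \<longrightarrow> Lf D X bl bu = Lf D X bl bu'" by simp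
qed


lemma sum_mono_single:
  assumes "i \<in> S" "finite S" "\<And>j. j \<in> S \<Longrightarrow> j \<noteq> i \<Longrightarrow> g j = 0"
  shows "(\<Sum>j\<in>S. mono j (g j)) = mono i (g i :: 'n::finite mat)"
proof -
  have "(\<Sum>j\<in>S. mono j (g j)) = (\<Sum>j\<in>S. if j = i then mono i (g i) else 0)"
  proof (rule sum.cong[OF refl])
    fix j assume "j \<in> S"
    then show "mono j (g j) = (if j = i then mono i (g i) else 0)"
      using assms(3)[of j] by (auto simp: mono_def fun_eq_iff)
  qed
  also have "\<dots> = mono i (g i)" using assms(1,2) by (simp add: sum.delta')
  finally show ?thesis .
qed


lemma ar1: assumes "(k::nat) \<ge> 2" shows "(k - 2) div 2 = k - 1 - (k + 1) div 2"
proof (cases "even k")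
  case True then obtain a where a: "k = 2 * a" by blast
  then have "k - 2 = 2 * (a - 1)" "k + 1 = 2 * a + 1" by auto
  then show ?thesis using a assms by simp
next
  case False then obtain a where a: "k = 2 * a + 1" using oddE by blast
  then have "k - 2 = 2 * (a - 1) + 1" "k + 1 = 2 * (a + 1)" using assms by auto
  then show ?thesis using a assms by simp
qed
lemma ar2: "odd (k::nat) \<Longrightarrow> k = 2 * ((k - 1) div 2) + 1" by presburger
lemma ar3: "(k::nat) \<ge> 2 \<Longrightarrow> odd k \<Longrightarrow> (k - 1) div 2 \<ge> 1" by presburger
lemma ar4: "(k::nat) = 2 * q + 1 \<Longrightarrow> (k + 1) div 2 = q + 1" by presburger
lemma ar5: "(k::nat) = 2 * q + 1 \<Longrightarrow> (k - 2) div 2 = q - 1" by presburger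
lemma ar6: "(k::nat) \<ge> 1 \<Longrightarrow> 1 \<le> (k + 1) div 2" by presburger
lemma ar7: "(k::nat) \<le> 2 * ((k + 1) div 2)" by presburger
lemma ar8: "(k::nat) \<ge> 1 \<Longrightarrow> (k + 1) div 2 \<le> k" by presburger


theorem mainTheorem10:
  fixes k :: nat and C :: "nat \<Rightarrow> complex^('n::{finite,linorder})^('n::{finite,linorder})" and X :: "complex^('n::{finite,linorder})^('n::{finite,linorder})"
  assumes hk: "k \<ge> 1"
    and hC: "\<forall>i. 1 \<le> i \<and> i \<le> k \<longrightarrow> is_diag (C i)"
    and hCk: "is_diag_reg (C k)"
  shows
    "(\<forall>b. in_Bod k b \<longrightarrow>
        (\<exists>c L. (\<forall>i. clinear_fun (L i)) \<and>
           (\<forall>b'. in_Bod k b' \<and> (\<forall>i. 1 \<le> i \<and> i < (k + 1) div 2 \<longrightarrow> b' i = b i) \<longrightarrow>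
              phi k C X b' = c + (\<Sum>i\<in>{(k + 1) div 2..<k}. L i (b' i)))))
   \<and> (k \<ge> 2 \<longrightarrow> (\<forall>b. in_Bod k b \<longrightarrow>
        ((\<forall>b'. in_Bod k b' \<and> (\<forall>i. 1 \<le> i \<and> i < (k + 1) div 2 \<longrightarrow> b' i = b i) \<longrightarrow>
              phi k C X b' = phi k C X b)
         \<longleftrightarrow> (is_diag X \<and> (\<forall>i. 1 \<le> i \<and> i \<le> (k - 2) div 2 \<longrightarrow> b i ** X = X ** b i)))))
   \<and> (k \<ge> 2 \<and> odd k \<longrightarrow> (\<forall>b bl. in_Bod k b \<and> is_diag X
          \<and> (\<forall>i. 1 \<le> i \<and> i \<le> (k - 2) div 2 \<longrightarrow> b i ** X = X ** b i)
          \<and> strictly_lower bl \<longrightarrow>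
        (\<exists>c L. clinear_fun L \<and>
           (\<forall>bu. strictly_upper bu \<longrightarrow>
              phi k C X (b((k - 1) div 2 := bl + bu)) = c + L bu))
        \<and> ((\<forall>bu bu'. strictly_upper bu \<and> strictly_upper bu' \<longrightarrow>
              phi k C X (b((k - 1) div 2 := bl + bu)) = phi k C X (b((k - 1) div 2 := bl + bu')))
           \<longleftrightarrow> bl ** X = X ** bl)))"
proof -
  define m where "m = (k + 1) div 2"
  have m1: "1 \<le> m" using ar6[OF hk] unfolding m_def .
  have m2: "k \<le> 2 * m" using ar7[of k] unfolding m_def .
  have m3: "m \<le> k" using ar8[OF hk] unfolding m_def .
  have Cd: "\<forall>l. 1 \<le> l \<and> l \<le> k \<longrightarrow> is_diag (C l)" using hC by blast
  have Ckd: "is_diag (C k)" using hCk by (simp add: is_diag_reg_def)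
  have lowag: "lowp m b' = lowp m b" if "\<forall>i. 1 \<le> i \<and> i < m \<longrightarrow> b' i = b i" for b b' :: "nat \<Rightarrow> 'n mat"
    using that by (auto simp: lowp_def fun_eq_iff)
  have decomp': "phi k C X b = phi k C X (lowp m b) + (\<Sum>i\<in>{m..<k}. LinF k C X (lowp m b) (mono i (b i)))" for b
    using decomp[OF hk m2 m1, of C X b] by (simp add: LinF_sum)
  have P1: "\<forall>b. in_Bod k b \<longrightarrow>
        (\<exists>c L. (\<forall>i. clinear_fun (L i)) \<and>
           (\<forall>b'. in_Bod k b' \<and> (\<forall>i. 1 \<le> i \<and> i < m \<longrightarrow> b' i = b i) \<longrightarrow>
              phi k C X b' = c + (\<Sum>i\<in>{m..<k}. L i (b' i))))"
  proof (intro allI impI)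
    fix b :: "nat \<Rightarrow> 'n mat"
    show "\<exists>c L. (\<forall>i. clinear_fun (L i)) \<and>
           (\<forall>b'. in_Bod k b' \<and> (\<forall>i. 1 \<le> i \<and> i < m \<longrightarrow> b' i = b i) \<longrightarrow>
              phi k C X b' = c + (\<Sum>i\<in>{m..<k}. L i (b' i)))"
    proof (intro exI conjI allI impI)
      show "clinear_fun (\<lambda>M. LinF k C X (lowp m b) (mono i M))" for i by (rule clinear_LinF)
      fix b' assume "in_Bod k b' \<and> (\<forall>i. 1 \<le> i \<and> i < m \<longrightarrow> b' i = b i)"
      then have "lowp m b' = lowp m b" using lowag by blast
      then show "phi k C X b' = phi k C X (lowp m b) + (\<Sum>i\<in>{m..<k}. LinF k C X (lowp m b) (mono i (b' i)))"
        using decomp'[of b'] by simp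
    qed
  qed
  have comm_iff: "commr k (lowp m b) X (k - 1 - m) \<longleftrightarrow> (\<forall>i. 1 \<le> i \<and> i \<le> (k - 2) div 2 \<longrightarrow> b i ** X = X ** b i)"
    if "k \<ge> 2" for b :: "nat \<Rightarrow> 'n mat"
  proof -
    have e: "(k - 2) div 2 = k - 1 - m" using ar1[OF that] unfolding m_def .
    have "bser k (lowp m b) s = b s" if "1 \<le> s" "s \<le> k - 1 - m" for s
      using that m2 m3 by (auto simp: bser_def lowp_def)
    then show ?thesis unfolding commr_def e by auto
  qed
  have P2: "k \<ge> 2 \<longrightarrow> (\<forall>b. in_Bod k b \<longrightarrow>
        ((\<forall>b'. in_Bod k b' \<and> (\<forall>i. 1 \<le> i \<and> i < m \<longrightarrow> b' i = b i) \<longrightarrow>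
              phi k C X b' = phi k C X b)
         \<longleftrightarrow> (is_diag X \<and> (\<forall>i. 1 \<le> i \<and> i \<le> (k - 2) div 2 \<longrightarrow> b i ** X = X ** b i))))"
  proof (intro impI allI)
    assume k2: "k \<ge> 2"
    fix b :: "nat \<Rightarrow> 'n mat" assume bB: "in_Bod k b"
    let ?b0 = "lowp m b"
    have b0B: "in_Bod k ?b0" using bB by (auto simp: in_Bod_def lowp_def is_offdiag_def)
    have b0ag: "\<forall>i. 1 \<le> i \<and> i < m \<longrightarrow> ?b0 i = b i" by (simp add: lowp_def)
    show "(\<forall>b'. in_Bod k b' \<and> (\<forall>i. 1 \<le> i \<and> i < m \<longrightarrow> b' i = b i) \<longrightarrow> phi k C X b' = phi k C X b)
         \<longleftrightarrow> (is_diag X \<and> (\<forall>i. 1 \<le> i \<and> i \<le> (k - 2) div 2 \<longrightarrow> b i ** X = X ** b i))"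
    proof
      assume H: "\<forall>b'. in_Bod k b' \<and> (\<forall>i. 1 \<le> i \<and> i < m \<longrightarrow> b' i = b i) \<longrightarrow> phi k C X b' = phi k C X b"
      have "\<forall>i M. m \<le> i \<and> i < k \<and> is_offdiag M \<longrightarrow> LinF k C X ?b0 (mono i M) = 0"
      proof (intro allI impI)
        fix i and M :: "'n mat" assume iM: "m \<le> i \<and> i < k \<and> is_offdiag M"
        define b' where "b' = ?b0(i := M)"
        have b'B: "in_Bod k b'" using b0B iM by (auto simp: b'_def in_Bod_def)
        have b'ag: "\<forall>j. 1 \<le> j \<and> j < m \<longrightarrow> b' j = b j" using iM by (auto simp: b'_def lowp_def)
        have l': "lowp m b' = ?b0" using lowag[OF b'ag] by simp
        have "(\<Sum>j\<in>{m..<k}. LinF k C X ?b0 (mono j (b' j))) = LinF k C X ?b0 (\<Sum>j\<in>{m..<k}. mono j (b' j))"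
          by (simp add: LinF_sum)
        also have "(\<Sum>j\<in>{m..<k}. mono j (b' j)) = mono i (b' i)"
          by (rule sum_mono_single) (use iM in \<open>auto simp: b'_def lowp_def\<close>)
        finally have "phi k C X b' = phi k C X ?b0 + LinF k C X ?b0 (mono i M)"
          using decomp'[of b'] unfolding l' by (simp add: b'_def)
        moreover have "phi k C X b' = phi k C X b" using H b'B b'ag by blast
        moreover have "phi k C X ?b0 = phi k C X b" using H b0B b0ag by blast
        ultimately show "LinF k C X ?b0 (mono i M) = 0" by simp
      qed
      then have "is_diag X \<and> commr k ?b0 X (k - 1 - m)"
        using part2core[OF k2 Cd hCk m_def] by blast
      then show "is_diag X \<and> (\<forall>i. 1 \<le> i \<and> i \<le> (k - 2) div 2 \<longrightarrow> b i ** X = X ** b i)"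
        using comm_iff[OF k2] by blast
    next
      assume "is_diag X \<and> (\<forall>i. 1 \<le> i \<and> i \<le> (k - 2) div 2 \<longrightarrow> b i ** X = X ** b i)"
      then have X: "is_diag X" and cr: "commr k ?b0 X (k - 1 - m)" using comm_iff[OF k2] by blast+
      have Z: "(\<Sum>i\<in>{m..<k}. LinF k C X ?b0 (mono i (b' i))) = 0" for b' :: "nat \<Rightarrow> 'n mat"
        by (rule sum.neutral) (use Lzero[OF hk X Cd cr] in auto)
      show "\<forall>b'. in_Bod k b' \<and> (\<forall>i. 1 \<le> i \<and> i < m \<longrightarrow> b' i = b i) \<longrightarrow> phi k C X b' = phi k C X b"
      proof (intro allI impI)
        fix b' assume "in_Bod k b' \<and> (\<forall>i. 1 \<le> i \<and> i < m \<longrightarrow> b' i = b i)"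
        then have "lowp m b' = ?b0" using lowag by blast
        then show "phi k C X b' = phi k C X b" using decomp'[of b'] decomp'[of b] Z by simp
      qed
    qed
  qed
  have P3: "(k \<ge> 2 \<and> odd k \<longrightarrow> (\<forall>b bl. in_Bod k b \<and> is_diag X
          \<and> (\<forall>i. 1 \<le> i \<and> i \<le> (k - 2) div 2 \<longrightarrow> b i ** X = X ** b i)
          \<and> strictly_lower bl \<longrightarrow>
        (\<exists>c L. clinear_fun L \<and>
           (\<forall>bu. strictly_upper bu \<longrightarrow>
              phi k C X (b((k - 1) div 2 := bl + bu)) = c + L bu))
        \<and> ((\<forall>bu bu'. strictly_upper bu \<and> strictly_upper bu' \<longrightarrow>
              phi k C X (b((k - 1) div 2 := bl + bu)) = phi k C X (b((k - 1) div 2 := bl + bu')))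
           \<longleftrightarrow> bl ** X = X ** bl)))"
  proof (intro impI allI)
    assume kk: "k \<ge> 2 \<and> odd k"
    fix b :: "nat \<Rightarrow> 'n mat" and bl :: "'n mat" assume A: "in_Bod k b \<and> is_diag X \<and> (\<forall>i. 1 \<le> i \<and> i \<le> (k - 2) div 2 \<longrightarrow> b i ** X = X ** b i) \<and> strictly_lower bl"
    then have X: "is_diag X" and bc: "\<forall>i. 1 \<le> i \<and> i \<le> (k - 2) div 2 \<longrightarrow> b i ** X = X ** b i"
      and L: "strictly_lower bl" by blast+
    define q where "q = (k - 1) div 2"
    have kq: "k = 2 * q + 1" using ar2[of k] kk unfolding q_def by blast
    have q1: "q \<ge> 1" using ar3[of k] kk unfolding q_def by blast
    have mq: "m = q + 1" using ar4[OF kq] unfolding m_def .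
    have e2: "(k - 2) div 2 = q - 1" using ar5[OF kq] .
    have main: "phi k C X (b(q := bl + bu)) = trace (C 1 ** X) + Lf (C k) X bl bu" if U: "strictly_upper bu" for bu :: "'n mat"
    proof -
      let ?bU = "b(q := bl + bu)"
      let ?b1 = "lowp m ?bU"
      have cr: "commr k ?b1 X (k - 1 - m)"
        unfolding commr_def
      proof (intro allI impI)
        fix s assume s: "1 \<le> s \<and> s \<le> k - 1 - m"
        then have "bser k ?b1 s = b s" using mq kq by (auto simp: bser_def lowp_def)
        moreover have "b s ** X = X ** b s" using bc s e2 mq kq by auto
        ultimately show "bser k ?b1 s ** X = X ** bser k ?b1 s" by simp
      qed
      have Z: "(\<Sum>i\<in>{m..<k}. LinF k C X ?b1 (mono i (?bU i))) = 0"
        by (rule sum.neutral) (use Lzero[OF hk X Cd cr] in auto)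
      have "phi k C X ?bU = phi k C X ?b1" using decomp'[of ?bU] Z by simp
      also have "\<dots> = trace (C 1 ** X) + trace (C k ** ((bl + bu) ** ((bl + bu) ** X - X ** (bl + bu))))"
      proof (rule phi_quad[OF kq q1 X Cd])
        show "?b1 q = bl + bu" using q1 mq by (simp add: lowp_def)
        show "\<forall>s. 1 \<le> s \<and> s < q \<longrightarrow> ?b1 s ** X = X ** ?b1 s"
          using bc e2 mq by (auto simp: lowp_def)
        show "\<forall>s. q < s \<longrightarrow> ?b1 s = 0" using mq by (simp add: lowp_def)
      qed
      also have "trace (C k ** ((bl + bu) ** ((bl + bu) ** X - X ** (bl + bu)))) = Lf (C k) X bl bu"
        by (rule Qf_eq[OF Ckd X L U])
      finally show ?thesis .
    qed
    show "(\<exists>c L. clinear_fun L \<and>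
           (\<forall>bu. strictly_upper bu \<longrightarrow>
              phi k C X (b((k - 1) div 2 := bl + bu)) = c + L bu))
        \<and> ((\<forall>bu bu'. strictly_upper bu \<and> strictly_upper bu' \<longrightarrow>
              phi k C X (b((k - 1) div 2 := bl + bu)) = phi k C X (b((k - 1) div 2 := bl + bu')))
           \<longleftrightarrow> bl ** X = X ** bl)"
      unfolding q_def[symmetric]
    proof
      show "\<exists>c L. clinear_fun L \<and> (\<forall>bu. strictly_upper bu \<longrightarrow> phi k C X (b(q := bl + bu)) = c + L bu)"
        using main clinear_Lf by blast
      have "(\<forall>bu bu'. strictly_upper bu \<and> strictly_upper bu' \<longrightarrow>
              phi k C X (b(q := bl + bu)) = phi k C X (b(q := bl + bu')))
         \<longleftrightarrow> (\<forall>bu bu'. strictly_upper bu \<and> strictly_upper bu' \<longrightarrow> Lf (C k) X bl bu = Lf (C k) X bl bu')"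
        using main by auto
      also have "\<dots> \<longleftrightarrow> bl ** X = X ** bl" by (rule part3_iff[OF hCk X L])
      finally show "(\<forall>bu bu'. strictly_upper bu \<and> strictly_upper bu' \<longrightarrow>
              phi k C X (b(q := bl + bu)) = phi k C X (b(q := bl + bu')))
         \<longleftrightarrow> bl ** X = X ** bl" .
    qed
  qed
  show ?thesis using P1 P2 P3 unfolding m_def by blast
qed

end
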